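(* Let $0<\ell\le\infty$ and let $g$ be a non-negative measurable function on $(0,\ell)$ (with $g(x)>0$ for $0<x<\ell$ when $p<0$). (a) If $p<0$ or $p\ge1$, then $$\int_0^\ell\Big(\frac1x\int_0^x g(y)dy\Big)^p\frac{dx}{x}\le 1\cdot\int_0^\ell g^p(x)\Big(1-\frac{x}{\ell}\Big)\frac{dx}{x}.$$ (b) If $0<p\le1$, then this inequality holds in the reversed direction. (c) The constant $1$ is sharp in both (a) and (b): in (a) it cannot be replaced by any constant $C<1$, and in (b) it cannot be replaced by any constant $C>1$.
   Context: When $\ell=\infty$, the factor $1-x/\ell$ is interpreted as $1$. *)

theory Defs
  imports "HOL-Analysis.Analysis"
begin

definition Iset :: "ereal \<Rightarrow> real set" where
  "Iset l = {x. 0 < x \<and> ereal x < l}"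

definition wt :: "ereal \<Rightarrow> real \<Rightarrow> real" where
  "wt l x = (if l = \<infinity> then 1 else 1 - x / real_of_ereal l)"

definition epow :: "ennreal \<Rightarrow> real \<Rightarrow> ennreal" where
  "epow a p = (if p = 0 then 1
     else if a = \<infinity> then (if p > 0 then \<infinity> else 0)
     else if a = 0 then (if p > 0 then 0 else \<infinity>)
     else ennreal (enn2real a powr p))"

definition hardy_adm :: "real \<Rightarrow> ereal \<Rightarrow> (real \<Rightarrow> real) \<Rightarrow> bool" where
  "hardy_adm p l g \<longleftrightarrow> set_borel_measurable lborel (Iset l) g
     \<and> (\<forall>x\<in>Iset l. 0 \<le> g x) \<and> (p < 0 \<longrightarrow> (\<forall>x\<in>Iset l. 0 < g x))"

definition hardy_lhs :: "real \<Rightarrow> ereal \<Rightarrow> (real \<Rightarrow> real) \<Rightarrow> ennreal" where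
  "hardy_lhs p l g = (\<integral>\<^sup>+ x \<in> Iset l.
      epow (ennreal (1 / x) * (\<integral>\<^sup>+ y \<in> {0<..<x}. ennreal (g y) \<partial>lborel)) p
      * ennreal (1 / x) \<partial>lborel)"

definition hardy_rhs :: "real \<Rightarrow> ereal \<Rightarrow> (real \<Rightarrow> real) \<Rightarrow> ennreal" where
  "hardy_rhs p l g = (\<integral>\<^sup>+ x \<in> Iset l.
      epow (ennreal (g x)) p * ennreal (wt l x / x) \<partial>lborel)"

end

theory Submission
  imports Defs
begin

lemma tangent_convex:
  fixes m t p :: real
  assumes m: "m > 0" and t: "t > 0" and p: "p \<le> 0 \<or> 1 \<le> p"
  shows "m powr p + p * m powr (p-1) * (t - m) \<le> t powr p"
proof -
  have pp: "0 \<le> p * (p-1)" using p by (auto intro: mult_nonpos_nonpos)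
  have "(p * m powr (p-1)) * (t - m) \<le> t powr p - m powr p"
    apply (rule f''_imp_f'[where C="{0<..}" and f="\<lambda>x. x powr p" and f'="\<lambda>x. p * x powr (p-1)"
          and f''="\<lambda>x. (p * (p-1)) * x powr (p-1-1)"])
    using m t pp by (auto intro!: derivative_eq_intros)
  then show ?thesis by simp
qed

lemma tangent_concave:
  fixes m t p :: real
  assumes m: "m > 0" and t: "t > 0" and p: "0 \<le> p" "p \<le> 1"
  shows "t powr p \<le> m powr p + p * m powr (p-1) * (t - m)"
proof -
  have pp: "0 \<le> - (p * (p-1))" using p by (auto simp: mult_nonneg_nonpos)
  have "(- p * m powr (p-1)) * (t - m) \<le> - (t powr p) - - (m powr p)"
    apply (rule f''_imp_f'[where C="{0<..}" and f="\<lambda>x. - (x powr p)" and f'="\<lambda>x. - p * x powr (p-1)"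
          and f''="\<lambda>x. (- (p * (p-1))) * x powr (p-1-1)"])
    using m t pp by (auto intro!: derivative_eq_intros mult_nonpos_nonneg)
  then show ?thesis by (simp add: algebra_simps)
qed
lemma epow_real:
  assumes "0 \<le> t" "p \<noteq> 0" "t > 0 \<or> p > 0"
  shows "epow (ennreal t) p = ennreal (t powr p)"
  using assms by (auto simp: epow_def)

lemma affine_int:
  fixes h :: "real \<Rightarrow> real"
  assumes S: "S \<in> sets lborel" "emeasure lborel S < \<infinity>"
    and hA: "has_bochner_integral lborel (\<lambda>y. h y * indicator S y) a"
  shows "has_bochner_integral lborel (\<lambda>y. (c0 + c1 * (h y - m)) * indicator S y)
           (measure lborel S * c0 + a * c1 - measure lborel S * (c1 * m))"
proof -
  have i1: "has_bochner_integral lborel (\<lambda>y. indicator S y *\<^sub>R c0) (measure lborel S *\<^sub>R c0)"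
    by (rule has_bochner_integral_indicator[OF S])
  have i2: "has_bochner_integral lborel (\<lambda>y. indicator S y *\<^sub>R (c1*m)) (measure lborel S *\<^sub>R (c1*m))"
    by (rule has_bochner_integral_indicator[OF S])
  have i3: "has_bochner_integral lborel (\<lambda>y. h y * indicator S y * c1) (a * c1)"
    using hA by (rule has_bochner_integral_mult_left)
  have "has_bochner_integral lborel (\<lambda>y. indicator S y *\<^sub>R c0 + h y * indicator S y * c1 - indicator S y *\<^sub>R (c1*m))
      (measure lborel S *\<^sub>R c0 + a * c1 - measure lborel S *\<^sub>R (c1*m))"
    by (intro has_bochner_integral_diff has_bochner_integral_add i1 i2 i3)
  then show ?thesis
    by (rule has_bochner_integral_cong[THEN iffD1, rotated -1]) (auto simp: indicator_def algebra_simps)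
qed

lemma tangent_convex':
  fixes m t p :: real
  assumes m: "m > 0" and t: "t \<ge> 0" "t > 0 \<or> p > 0" and p: "p \<le> 0 \<or> 1 \<le> p"
  shows "m powr p + p * m powr (p-1) * (t - m) \<le> t powr p"
proof (cases "t > 0")
  case True thus ?thesis using tangent_convex m p by blast
next
  case False
  then have t0: "t = 0" "p \<ge> 1" using t p by auto
  have "m powr (p-1) * m = m powr p" using m by (simp add: powr_diff)
  then have "m powr p + p * m powr (p-1) * (t - m) = (1 - p) * m powr p" using t0 by (simp add: algebra_simps)
  also have "\<dots> \<le> 0" using t0 by (simp add: mult_nonpos_nonneg)
  finally show ?thesis using t0 by simp
qed

lemma tangent_concave':
  fixes m t p :: real
  assumes m: "m > 0" and t: "t \<ge> 0" and p: "0 < p" "p \<le> 1"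
  shows "t powr p \<le> m powr p + p * m powr (p-1) * (t - m)"
proof (cases "t > 0")
  case True thus ?thesis using tangent_concave m p by simp
next
  case False
  then have t0: "t = 0" using t by auto
  have "m powr (p-1) * m = m powr p" using m by (simp add: powr_diff)
  then have "m powr p + p * m powr (p-1) * (t - m) = (1 - p) * m powr p" using t0 by (simp add: algebra_simps)
  moreover have "0 \<le> (1 - p) * m powr p" using p by simp
  ultimately show ?thesis using t0 by simp
qed

lemma bochner_from_nn:
  fixes f :: "real \<Rightarrow> real"
  assumes [measurable]: "f \<in> borel_measurable lborel" "S \<in> sets lborel"
    and "\<And>y. y \<in> S \<Longrightarrow> 0 \<le> f y"
    and "(\<integral>\<^sup>+y\<in>S. ennreal (f y) \<partial>lborel) = ennreal c" "0 \<le> c"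
  shows "has_bochner_integral lborel (\<lambda>y. f y * indicator S y) c"
proof (rule has_bochner_integral_nn_integral)
  show "AE x in lborel. 0 \<le> f x * indicator S x" using assms(3) by (auto simp: indicator_def)
  have "(\<integral>\<^sup>+y. ennreal (f y * indicator S y) \<partial>lborel) = (\<integral>\<^sup>+y\<in>S. ennreal (f y) \<partial>lborel)"
    by (intro nn_integral_cong) (auto simp: indicator_def)
  then show "(\<integral>\<^sup>+y. ennreal (f y * indicator S y) \<partial>lborel) = ennreal c" using assms(4) by simp
qed (use assms in auto)

lemma jensen_a:
  fixes h :: "real \<Rightarrow> real" and x p :: real
  assumes hm[measurable]: "h \<in> borel_measurable lborel" and x: "x > 0" and p: "p < 0 \<or> 1 \<le> p"
    and h0: "\<And>y. y \<in> {0<..<x} \<Longrightarrow> 0 \<le> h y"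
    and hpos: "p < 0 \<Longrightarrow> \<forall>y \<in> {0<..<x}. 0 < h y"
  shows "epow (ennreal (1/x) * (\<integral>\<^sup>+y\<in>{0<..<x}. ennreal (h y) \<partial>lborel)) p
         \<le> ennreal (1/x) * (\<integral>\<^sup>+y\<in>{0<..<x}. epow (ennreal (h y)) p \<partial>lborel)"
proof -
  define S where "S = {0<..<x}"
  define A where "A = (\<integral>\<^sup>+y\<in>S. ennreal (h y) \<partial>lborel)"
  define B where "B = (\<integral>\<^sup>+y\<in>S. ennreal (h y powr p) \<partial>lborel)"
  have p0: "p \<noteq> 0" using p by auto
  have SM[measurable]: "S \<in> sets lborel" by (simp add: S_def)
  have mS: "emeasure lborel S = ennreal x" "measure lborel S = x" using x by (auto simp: S_def)
  have "(\<integral>\<^sup>+y\<in>S. epow (ennreal (h y)) p \<partial>lborel) = B"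
    unfolding B_def
    proof (intro nn_integral_cong)
    fix y
    show "epow (ennreal (h y)) p * indicator S y = ennreal (h y powr p) * indicator S y"
    proof (cases "y \<in> S")
      case True
      then have "h y \<ge> 0" "h y > 0 \<or> p > 0" using h0 hpos p by (auto simp: S_def)
      then show ?thesis using True p0 by (simp add: epow_real)
    qed simp
  qed
  then have goal: "?thesis \<longleftrightarrow> epow (ennreal (1/x) * A) p \<le> ennreal (1/x) * B"
    by (simp add: A_def S_def)
  have x1: "ennreal (1/x) \<noteq> 0" using x by simp
  consider "A = \<infinity>" | "A = 0" | a where "A = ennreal a" "a > 0"
  proof (cases A rule: ennreal_cases)
    case (real r)
    then show ?thesis using that(2,3) by (cases "r = 0") auto
  qed (use that in auto)
  then have main: "epow (ennreal (1/x) * A) p \<le> ennreal (1/x) * B"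
  proof cases
    case 1
    then have inf: "ennreal (1/x) * A = \<infinity>" using x1 by (simp add: ennreal_mult_top)
    show ?thesis
    proof (cases "p < 0")
      case True
      have "epow (ennreal (1/x) * A) p = 0" using inf True by (simp add: epow_def)
      then show ?thesis by simp
    next
      case False
      then have p1: "p \<ge> 1" using p by auto
      have "A \<le> (\<integral>\<^sup>+y. indicator S y + ennreal (h y powr p) * indicator S y \<partial>lborel)"
        unfolding A_def
      proof (intro nn_integral_mono)
        fix y
        have "h y \<le> 1 + h y powr p" if "y \<in> S"
        proof (cases "h y \<le> 1")
          case True then show ?thesis using powr_ge_zero[of "h y" p] by linarith
        next
          case False
          then have "h y powr 1 \<le> h y powr p" using p1 by (intro powr_mono) auto
          then show ?thesis using False by simp
        qed
        then have "y \<in> S \<Longrightarrow> ennreal (h y) \<le> 1 + ennreal (h y powr p)"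
          using ennreal_leI[of "h y" "1 + h y powr p"] by (simp add: ennreal_plus)
        then show "ennreal (h y) * indicator S y \<le> indicator S y + ennreal (h y powr p) * indicator S y"
          by (auto simp: indicator_def)
      qed
      also have "\<dots> = emeasure lborel S + B"
        unfolding B_def by (subst nn_integral_add) (auto simp: nn_integral_indicator[OF SM])
      finally have "B = \<infinity>" using 1 mS by (auto simp: top_unique)
      then show ?thesis using x1 by (simp add: ennreal_mult_top)
    qed
  next
    case 2
    show ?thesis
    proof (cases "p < 0")
      case True
      have "emeasure lborel {y \<in> space lborel. ennreal (h y) * indicator S y \<noteq> 0} = 0"
        using 2 unfolding A_def by (subst nn_integral_0_iff[symmetric]) auto
      moreover have "S \<subseteq> {y \<in> space lborel. ennreal (h y) * indicator S y \<noteq> 0}"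
        using hpos True by (auto simp: S_def)
      moreover have "{y \<in> space lborel. ennreal (h y) * indicator S y \<noteq> 0} \<in> sets lborel"
        by measurable
      ultimately have "emeasure lborel S = 0"
        using emeasure_mono[of S "{y \<in> space lborel. ennreal (h y) * indicator S y \<noteq> 0}" lborel]
        by simp
      then show ?thesis using mS x by simp
    next
      case False
      then show ?thesis using 2 p by (simp add: epow_def)
    qed
  next
    case 3
    define m where "m = a / x"
    have m: "m > 0" using 3 x by (simp add: m_def)
    have "ennreal (1/x) * A = ennreal m"
      using 3 x by (simp add: m_def ennreal_mult'[symmetric])
    then have lhs: "epow (ennreal (1/x) * A) p = ennreal (m powr p)"
      using m p0 by (simp add: epow_real)
    show ?thesis
    proof (cases "B = \<infinity>")
      case True then show ?thesis using x1 by (simp add: ennreal_mult_top)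
    next
      case False
      then obtain b where b: "B = ennreal b" "b \<ge> 0"
        by (cases B) auto
      have hA: "has_bochner_integral lborel (\<lambda>y. h y * indicator S y) a"
        using 3 by (intro bochner_from_nn) (auto simp: A_def S_def h0)
      have hB: "has_bochner_integral lborel (\<lambda>y. h y powr p * indicator S y) b"
        using b by (intro bochner_from_nn) (auto simp: B_def S_def h0)
      have hL: "has_bochner_integral lborel (\<lambda>y. (m powr p + (p * m powr (p-1)) * (h y - m)) * indicator S y)
           (measure lborel S * m powr p + a * (p * m powr (p-1)) - measure lborel S * ((p * m powr (p-1)) * m))"
        by (rule affine_int[OF SM _ hA]) (use mS in simp)
      have "a = m * x" using x by (simp add: m_def)
      then have val: "measure lborel S * m powr p + a * (p * m powr (p-1)) - measure lborel S * ((p * m powr (p-1)) * m)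
          = x * m powr p" using mS by (simp add: algebra_simps)
      have "x * m powr p \<le> b"
      proof -
        have "integral\<^sup>L lborel (\<lambda>y. (m powr p + (p * m powr (p-1)) * (h y - m)) * indicator S y)
            \<le> integral\<^sup>L lborel (\<lambda>y. h y powr p * indicator S y)"
        proof (rule integral_mono)
          fix y
          show "(m powr p + p * m powr (p - 1) * (h y - m)) * indicator S y \<le> h y powr p * indicator S y"
          proof (cases "y \<in> S")
            case True
            have "h y \<ge> 0" "h y > 0 \<or> p > 0" using True h0 hpos p by (auto simp: S_def)
            then show ?thesis using True tangent_convex'[OF m _ _ ] p by auto
          qed simp
        qed (use hL hB in \<open>auto simp: has_bochner_integral_iff\<close>)
        then show ?thesis using hL hB val by (simp add: has_bochner_integral_integral_eq)
      qed
      then have "m powr p \<le> b / x" using x by (simp add: field_simps)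
      then have "ennreal (m powr p) \<le> ennreal (1/x) * ennreal b"
        using x by (simp add: ennreal_mult'[symmetric] ennreal_leI)
      then show ?thesis using lhs b by simp
    qed
  qed
  then show ?thesis using goal by simp
qed
lemma jensen_b:
  fixes h :: "real \<Rightarrow> real" and x p :: real
  assumes hm[measurable]: "h \<in> borel_measurable lborel" and x: "x > 0" and p: "0 < p" "p \<le> 1"
    and h0: "\<And>y. y \<in> {0<..<x} \<Longrightarrow> 0 \<le> h y"
  shows "ennreal (1/x) * (\<integral>\<^sup>+y\<in>{0<..<x}. epow (ennreal (h y)) p \<partial>lborel)
        \<le> epow (ennreal (1/x) * (\<integral>\<^sup>+y\<in>{0<..<x}. ennreal (h y) \<partial>lborel)) p"
proof -
  define S where "S = {0<..<x}"
  define A where "A = (\<integral>\<^sup>+y\<in>S. ennreal (h y) \<partial>lborel)"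
  define B where "B = (\<integral>\<^sup>+y\<in>S. ennreal (h y powr p) \<partial>lborel)"
  have p0: "p \<noteq> 0" using p by auto
  have SM[measurable]: "S \<in> sets lborel" by (simp add: S_def)
  have mS: "emeasure lborel S = ennreal x" "measure lborel S = x" using x by (auto simp: S_def)
  have "(\<integral>\<^sup>+y\<in>S. epow (ennreal (h y)) p \<partial>lborel) = B"
    unfolding B_def
  proof (intro nn_integral_cong)
    fix y
    show "epow (ennreal (h y)) p * indicator S y = ennreal (h y powr p) * indicator S y"
    proof (cases "y \<in> S")
      case True
      then have "h y \<ge> 0" using h0 by (auto simp: S_def)
      then show ?thesis using True p0 p by (simp add: epow_real)
    qed simp
  qed
  then have goal: "?thesis \<longleftrightarrow> ennreal (1/x) * B \<le> epow (ennreal (1/x) * A) p"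
    by (simp add: A_def S_def)
  have x1: "ennreal (1/x) \<noteq> 0" using x by simp
  consider "A = \<infinity>" | "A = 0" | a where "A = ennreal a" "a > 0"
  proof (cases A rule: ennreal_cases)
    case (real r)
    then show ?thesis using that(2,3) by (cases "r = 0") auto
  qed (use that in auto)
  then have main: "ennreal (1/x) * B \<le> epow (ennreal (1/x) * A) p"
  proof cases
    case 1
    then have inf: "ennreal (1/x) * A = \<infinity>" using x1 by (simp add: ennreal_mult_top)
    have "epow (ennreal (1/x) * A) p = \<infinity>" using inf p by (simp add: epow_def)
    then show ?thesis by simp
  next
    case 2
    have "AE y in lborel. ennreal (h y) * indicator S y = 0"
      using 2 unfolding A_def by (subst nn_integral_0_iff_AE[symmetric]) auto
    then have "AE y in lborel. ennreal (h y powr p) * indicator S y = 0"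
    proof (rule AE_mp, intro AE_I2 impI)
      fix y assume "ennreal (h y) * indicator S y = 0"
      then show "ennreal (h y powr p) * indicator S y = 0"
        using h0[of y] by (cases "y \<in> S") (auto simp: S_def)
    qed
    then have "B = 0" unfolding B_def by (subst nn_integral_0_iff_AE) auto
    then show ?thesis by simp
  next
    case 3
    define m where "m = a / x"
    have m: "m > 0" using 3 x by (simp add: m_def)
    have "ennreal (1/x) * A = ennreal m"
      using 3 x by (simp add: m_def ennreal_mult'[symmetric])
    then have lhs: "epow (ennreal (1/x) * A) p = ennreal (m powr p)"
      using m p0 by (simp add: epow_real)
    have "B \<le> (\<integral>\<^sup>+y. indicator S y + ennreal (h y) * indicator S y \<partial>lborel)"
      unfolding B_def
    proof (intro nn_integral_mono)
      fix y
      have "h y powr p \<le> 1 + h y" if "y \<in> S"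
      proof (cases "h y \<le> 1")
        case True
        have "h y powr p \<le> 1" using True h0[of y] that p by (auto simp: S_def intro: powr_le1)
        then show ?thesis using h0[of y] that by (simp add: S_def)
      next
        case False
        then have "h y powr p \<le> h y powr 1" using p by (intro powr_mono) auto
        then show ?thesis using False by simp
      qed
      then have "y \<in> S \<Longrightarrow> ennreal (h y powr p) \<le> 1 + ennreal (h y)"
        using ennreal_leI[of "h y powr p" "1 + h y"] h0[of y] by (simp add: ennreal_plus S_def)
      then show "ennreal (h y powr p) * indicator S y \<le> indicator S y + ennreal (h y) * indicator S y"
        by (auto simp: indicator_def)
    qed
    also have "\<dots> = emeasure lborel S + A"
      unfolding A_def by (subst nn_integral_add) (auto simp: nn_integral_indicator[OF SM])
    finally have "B \<noteq> \<infinity>" using 3 mS by (auto simp: top_unique ennreal_plus[symmetric] simp del: ennreal_plus)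
    then obtain b where b: "B = ennreal b" "b \<ge> 0"
      by (cases B) auto
    have hA: "has_bochner_integral lborel (\<lambda>y. h y * indicator S y) a"
      using 3 by (intro bochner_from_nn) (auto simp: A_def S_def h0)
    have hB: "has_bochner_integral lborel (\<lambda>y. h y powr p * indicator S y) b"
      using b by (intro bochner_from_nn) (auto simp: B_def S_def h0)
    have hL: "has_bochner_integral lborel (\<lambda>y. (m powr p + (p * m powr (p-1)) * (h y - m)) * indicator S y)
         (measure lborel S * m powr p + a * (p * m powr (p-1)) - measure lborel S * ((p * m powr (p-1)) * m))"
      by (rule affine_int[OF SM _ hA]) (use mS in simp)
    have "a = m * x" using x by (simp add: m_def)
    then have val: "measure lborel S * m powr p + a * (p * m powr (p-1)) - measure lborel S * ((p * m powr (p-1)) * m)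
        = x * m powr p" using mS by (simp add: algebra_simps)
    have "b \<le> x * m powr p"
    proof -
      have "integral\<^sup>L lborel (\<lambda>y. h y powr p * indicator S y)
          \<le> integral\<^sup>L lborel (\<lambda>y. (m powr p + (p * m powr (p-1)) * (h y - m)) * indicator S y)"
      proof (rule integral_mono)
        fix y
        show "h y powr p * indicator S y \<le> (m powr p + p * m powr (p - 1) * (h y - m)) * indicator S y"
        proof (cases "y \<in> S")
          case True
          have "h y \<ge> 0" using True h0 by (auto simp: S_def)
          then show ?thesis using True tangent_concave'[OF m _ p] by auto
        qed simp
      qed (use hL hB in \<open>auto simp: has_bochner_integral_iff\<close>)
      then show ?thesis using hL hB val by (simp add: has_bochner_integral_integral_eq)
    qed
    then have "b / x \<le> m powr p" using x by (simp add: field_simps)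
    then have "ennreal (1/x) * ennreal b \<le> ennreal (m powr p)"
      using x by (simp add: ennreal_mult'[symmetric] ennreal_leI)
    then show ?thesis using lhs b by simp
  qed
  then show ?thesis using goal by simp
qed
lemma Iset_cases:
  assumes "0 < l"
  obtains "l = \<infinity>" "Iset l = {0<..}" | L where "l = ereal L" "L > 0" "Iset l = {0<..<L}"
proof (cases l)
  case (real r)
  then show ?thesis using assms by (intro that(2)[of r]) (auto simp: Iset_def)
next
  case PInf
  then show ?thesis using that(1) by (auto simp: Iset_def)
qed (use assms in auto)

lemma Iset_sets[measurable]: "0 < l \<Longrightarrow> Iset l \<in> sets borel"
  by (erule Iset_cases) auto

lemma tail_int:
  assumes l: "0 < l" and y: "y \<in> Iset l"
  shows "(\<integral>\<^sup>+x. ennreal (1/x * (1/x)) * indicator {y<..} x * indicator (Iset l) x \<partial>lborel)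
         = ennreal (wt l y / y)"
proof -
  have y0: "y > 0" using y by (simp add: Iset_def)
  have d: "DERIV (\<lambda>x. - (1/x)) x :> 1/x * (1/x)" if "x > 0" for x :: real
    using that by (auto intro!: derivative_eq_intros simp: power2_eq_square field_simps)
  from l show ?thesis
  proof (cases rule: Iset_cases)
    case 1
    have lim: "((\<lambda>x::real. - (1/x)) \<longlongrightarrow> - 0) at_top"
      by (intro tendsto_minus tendsto_divide_0[OF tendsto_const] filterlim_at_top_imp_at_infinity filterlim_ident)
    have e: "(\<integral>\<^sup>+x. ennreal (1/x * (1/x)) * indicator {y..} x \<partial>lborel) = - 0 - (- (1/y))"
      by (rule nn_integral_FTC_atLeast[where F="\<lambda>x. - (1/x)"]) (use y0 d lim in auto)
    have "(\<integral>\<^sup>+x. ennreal (1/x * (1/x)) * indicator {y<..} x * indicator (Iset l) x \<partial>lborel)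
        = (\<integral>\<^sup>+x. ennreal (1/x * (1/x)) * indicator {y..} x \<partial>lborel)"
      using 1 y0 by (intro nn_integral_cong_AE eventually_mono[OF AE_lborel_singleton[of y]])
         (auto simp: indicator_def)
    then show ?thesis using 1 e by (simp add: wt_def)
  next
    case (2 L)
    have yL: "y < L" using y 2 by auto
    have "(\<integral>\<^sup>+x. ennreal (1/x * (1/x)) * indicator {y<..} x * indicator (Iset l) x \<partial>lborel)
        = (\<integral>\<^sup>+x. ennreal (1/x * (1/x)) * indicator {y..L} x \<partial>lborel)"
    proof (intro nn_integral_cong_AE)
      show "AE x in lborel. ennreal (1/x * (1/x)) * indicator {y<..} x * indicator (Iset l) x
          = ennreal (1/x * (1/x)) * indicator {y..L} x"
        using AE_lborel_singleton[of y] AE_lborel_singleton[of L]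
        by eventually_elim (use 2 y0 yL in \<open>auto simp: indicator_def\<close>)
    qed
    also have "\<dots> = (- (1/L)) - (- (1/y))"
      by (rule nn_integral_FTC_Icc[where F="\<lambda>x. - (1/x)"]) (use y0 yL d in auto)
    finally show ?thesis using 2 y0 by (simp add: wt_def field_simps)
  qed
qed
lemma fubini_step:
  fixes F :: "real \<Rightarrow> ennreal"
  assumes Fm[measurable]: "F \<in> borel_measurable borel" and l: "0 < l"
  shows "(\<integral>\<^sup>+x\<in>Iset l. (ennreal (1/x) * (\<integral>\<^sup>+y\<in>{0<..<x}. F y \<partial>lborel)) * ennreal (1/x) \<partial>lborel)
       = (\<integral>\<^sup>+y\<in>Iset l. F y * ennreal (wt l y / y) \<partial>lborel)"
proof -
  have I[measurable]: "Iset l \<in> sets borel" using l by simp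
  define K where "K = (\<lambda>x y. F y * indicator {0<..<x} y * (ennreal (1/x * (1/x)) * indicator (Iset l) x))"
  have Km: "case_prod K \<in> borel_measurable (lborel \<Otimes>\<^sub>M lborel)"
  proof -
    have "case_prod K = (\<lambda>z. F (snd z) * indicator {z. 0 < snd z \<and> snd z < fst z} z
        * (ennreal (1/fst z * (1/fst z)) * indicator (Iset l) (fst z)))"
      by (auto simp: K_def indicator_def fun_eq_iff)
    also have "\<dots> \<in> borel_measurable (lborel \<Otimes>\<^sub>M lborel)"
      by measurable
    finally show ?thesis .
  qed
  have "(\<integral>\<^sup>+x\<in>Iset l. (ennreal (1/x) * (\<integral>\<^sup>+y\<in>{0<..<x}. F y \<partial>lborel)) * ennreal (1/x) \<partial>lborel)
      = (\<integral>\<^sup>+x. (\<integral>\<^sup>+y. K x y \<partial>lborel) \<partial>lborel)"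
  proof (intro nn_integral_cong)
    fix x :: real
    show "(ennreal (1/x) * (\<integral>\<^sup>+y\<in>{0<..<x}. F y \<partial>lborel)) * ennreal (1/x) * indicator (Iset l) x
        = (\<integral>\<^sup>+y. K x y \<partial>lborel)"
    proof (cases "x \<in> Iset l")
      case True
      then have x0: "x > 0" by (simp add: Iset_def)
      have "(\<integral>\<^sup>+y. K x y \<partial>lborel) = (\<integral>\<^sup>+y. (F y * indicator {0<..<x} y) * ennreal (1/x * (1/x)) \<partial>lborel)"
        using True by (intro nn_integral_cong) (simp add: K_def)
      also have "\<dots> = (\<integral>\<^sup>+y\<in>{0<..<x}. F y \<partial>lborel) * ennreal (1/x * (1/x))"
        by (rule nn_integral_multc) measurable
      moreover have "ennreal (1/x * (1/x)) = ennreal (1/x) * ennreal (1/x)"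
        by (rule ennreal_mult) (use x0 in auto)
      ultimately show ?thesis using True
        by (simp add: mult_ac)
    next
      case False
      then show ?thesis by (simp add: K_def)
    qed
  qed
  also have "\<dots> = (\<integral>\<^sup>+y. (\<integral>\<^sup>+x. K x y \<partial>lborel) \<partial>lborel)"
    by (rule lborel_pair.Fubini'[symmetric]) (rule Km)
  also have "\<dots> = (\<integral>\<^sup>+y\<in>Iset l. F y * ennreal (wt l y / y) \<partial>lborel)"
  proof (intro nn_integral_cong)
    fix y :: real
    show "(\<integral>\<^sup>+x. K x y \<partial>lborel) = F y * ennreal (wt l y / y) * indicator (Iset l) y"
    proof (cases "y \<in> Iset l")
      case True
      then have y0: "y > 0" by (simp add: Iset_def)
      have "(\<integral>\<^sup>+x. K x y \<partial>lborel)
          = (\<integral>\<^sup>+x. F y * (ennreal (1/x * (1/x)) * indicator {y<..} x * indicator (Iset l) x) \<partial>lborel)"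
        using y0 by (intro nn_integral_cong) (auto simp: K_def indicator_def)
      also have "\<dots> = F y * (\<integral>\<^sup>+x. ennreal (1/x * (1/x)) * indicator {y<..} x * indicator (Iset l) x \<partial>lborel)"
        by (rule nn_integral_cmult) measurable
      also have "\<dots> = F y * ennreal (wt l y / y)"
        using tail_int[OF l True] by simp
      finally show ?thesis using True by simp
    next
      case False
      have "K x y = 0" for x
      proof -
        have "\<not> (y \<in> {0<..<x} \<and> x \<in> Iset l)"
        proof
          assume a: "y \<in> {0<..<x} \<and> x \<in> Iset l"
          then have "ereal y < ereal x" "ereal x < l" by (auto simp: Iset_def)
          then have "ereal y < l" by (rule less_trans)
          then show False using a False by (simp add: Iset_def)
        qed
        then show ?thesis by (auto simp: K_def indicator_def)
      qed
      then show ?thesis using False by simp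
    qed
  qed
  finally show ?thesis .
qed
lemma Iset_sets'[measurable]: "Iset l \<in> sets borel"
proof -
  have "Iset l = {x \<in> space borel. ereal x < l \<and> 0 < x}" by (auto simp: Iset_def)
  also have "\<dots> \<in> sets borel" by measurable
  finally show ?thesis .
qed

lemma wt_meas[measurable]: "wt l \<in> borel_measurable borel"
  unfolding wt_def[abs_def] by measurable

lemma epow_ennreal_eq:
  "epow (ennreal t) p = (if p = 0 then 1 else if t \<le> 0 then (if p > 0 then 0 else \<infinity>) else ennreal (t powr p))"
  by (auto simp: epow_def ennreal_eq_0_iff)

lemma epow_meas[measurable]:
  assumes [measurable]: "f \<in> borel_measurable M"
  shows "(\<lambda>y. epow (ennreal (f y)) p) \<in> borel_measurable M"
  unfolding epow_ennreal_eq by measurable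
lemma Ioo_sub_Iset: "x \<in> Iset l \<Longrightarrow> y \<in> {0<..<x} \<Longrightarrow> y \<in> Iset l"
  by (auto simp: Iset_def intro: less_trans[of "ereal y" "ereal x" l])

definition restr :: "ereal \<Rightarrow> (real \<Rightarrow> real) \<Rightarrow> real \<Rightarrow> real" where
  "restr l g y = indicator (Iset l) y * g y"

lemma restr_meas:
  assumes "hardy_adm p l g" shows "restr l g \<in> borel_measurable lborel"
proof -
  have "(\<lambda>x. indicator (Iset l) x *\<^sub>R g x) \<in> borel_measurable lborel"
    using assms by (simp add: hardy_adm_def set_borel_measurable_def)
  then show ?thesis by (simp add: restr_def[abs_def])
qed

lemma restr_lhs: "hardy_lhs p l (restr l g) = hardy_lhs p l g"
  unfolding hardy_lhs_def
proof (intro nn_integral_cong)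
  fix x
  show "epow (ennreal (1 / x) * (\<integral>\<^sup>+ y\<in>{0<..<x}. ennreal (restr l g y) \<partial>lborel)) p * ennreal (1 / x) * indicator (Iset l) x =
        epow (ennreal (1 / x) * (\<integral>\<^sup>+ y\<in>{0<..<x}. ennreal (g y) \<partial>lborel)) p * ennreal (1 / x) * indicator (Iset l) x"
  proof (cases "x \<in> Iset l")
    case True
    have "(\<integral>\<^sup>+ y\<in>{0<..<x}. ennreal (restr l g y) \<partial>lborel) = (\<integral>\<^sup>+ y\<in>{0<..<x}. ennreal (g y) \<partial>lborel)"
      using Ioo_sub_Iset[OF True] by (intro nn_integral_cong) (auto simp: restr_def indicator_def)
    then show ?thesis by simp
  qed simp
qed

lemma restr_rhs: "hardy_rhs p l (restr l g) = hardy_rhs p l g"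
  unfolding hardy_rhs_def by (intro nn_integral_cong) (auto simp: restr_def indicator_def)

lemma main_ab:
  assumes l: "0 < l" and adm: "hardy_adm p l g"
  shows "(p < 0 \<or> 1 \<le> p) \<Longrightarrow> hardy_lhs p l g \<le> hardy_rhs p l g"
    and "0 < p \<Longrightarrow> p \<le> 1 \<Longrightarrow> hardy_rhs p l g \<le> hardy_lhs p l g"
proof -
  define G where "G = restr l g"
  have Gm[measurable]: "G \<in> borel_measurable lborel" using restr_meas[OF adm] by (simp add: G_def)
  have Gb[measurable]: "G \<in> borel_measurable borel" using Gm by simp
  have G0: "x \<in> Iset l \<Longrightarrow> y \<in> {0<..<x} \<Longrightarrow> 0 \<le> G y" for x y
    using adm Ioo_sub_Iset[of x l y] by (auto simp: G_def restr_def hardy_adm_def)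
  have Gp: "p < 0 \<Longrightarrow> x \<in> Iset l \<Longrightarrow> \<forall>y\<in>{0<..<x}. 0 < G y" for x
    using adm Ioo_sub_Iset[of x l] by (auto simp: G_def restr_def hardy_adm_def)
  have xpos: "x \<in> Iset l \<Longrightarrow> x > 0" for x by (simp add: Iset_def)
  have fub: "(\<integral>\<^sup>+x\<in>Iset l. (ennreal (1/x) * (\<integral>\<^sup>+y\<in>{0<..<x}. epow (ennreal (G y)) p \<partial>lborel)) * ennreal (1/x) \<partial>lborel)
       = hardy_rhs p l G"
    unfolding hardy_rhs_def by (rule fubini_step[OF _ l]) measurable
  {
    assume p: "p < 0 \<or> 1 \<le> p"
    have "hardy_lhs p l G \<le> (\<integral>\<^sup>+x\<in>Iset l. (ennreal (1/x) * (\<integral>\<^sup>+y\<in>{0<..<x}. epow (ennreal (G y)) p \<partial>lborel)) * ennreal (1/x) \<partial>lborel)"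
      unfolding hardy_lhs_def
    proof (intro nn_integral_mono)
      fix x
      show "epow (ennreal (1 / x) * (\<integral>\<^sup>+ y\<in>{0<..<x}. ennreal (G y) \<partial>lborel)) p * ennreal (1 / x) * indicator (Iset l) x
          \<le> ennreal (1/x) * (\<integral>\<^sup>+y\<in>{0<..<x}. epow (ennreal (G y)) p \<partial>lborel) * ennreal (1/x) * indicator (Iset l) x"
      proof (cases "x \<in> Iset l")
        case True
        have "epow (ennreal (1 / x) * (\<integral>\<^sup>+ y\<in>{0<..<x}. ennreal (G y) \<partial>lborel)) p
            \<le> ennreal (1/x) * (\<integral>\<^sup>+y\<in>{0<..<x}. epow (ennreal (G y)) p \<partial>lborel)"
          by (rule jensen_a[OF Gm xpos[OF True] p]) (use G0[OF True] Gp[OF _ True] in auto)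
        then show ?thesis by (intro mult_right_mono) auto
      qed simp
    qed
    then show "hardy_lhs p l g \<le> hardy_rhs p l g"
      using fub by (simp add: G_def restr_lhs restr_rhs)
  }
  {
    assume p: "0 < p" "p \<le> 1"
    have "(\<integral>\<^sup>+x\<in>Iset l. (ennreal (1/x) * (\<integral>\<^sup>+y\<in>{0<..<x}. epow (ennreal (G y)) p \<partial>lborel)) * ennreal (1/x) \<partial>lborel) \<le> hardy_lhs p l G"
      unfolding hardy_lhs_def
    proof (intro nn_integral_mono)
      fix x
      show "ennreal (1/x) * (\<integral>\<^sup>+y\<in>{0<..<x}. epow (ennreal (G y)) p \<partial>lborel) * ennreal (1/x) * indicator (Iset l) x
          \<le> epow (ennreal (1 / x) * (\<integral>\<^sup>+ y\<in>{0<..<x}. ennreal (G y) \<partial>lborel)) p * ennreal (1 / x) * indicator (Iset l) x"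
      proof (cases "x \<in> Iset l")
        case True
        have "ennreal (1/x) * (\<integral>\<^sup>+y\<in>{0<..<x}. epow (ennreal (G y)) p \<partial>lborel)
            \<le> epow (ennreal (1 / x) * (\<integral>\<^sup>+ y\<in>{0<..<x}. ennreal (G y) \<partial>lborel)) p"
          by (rule jensen_b[OF Gm xpos[OF True] p]) (use G0[OF True] in auto)
        then show ?thesis by (intro mult_right_mono) auto
      qed simp
    qed
    then show "hardy_rhs p l g \<le> hardy_lhs p l g"
      using fub by (simp add: G_def restr_lhs restr_rhs)
  }
qed
lemma int_powr0:
  fixes a x :: real
  assumes a: "a > -1" and x: "x > 0"
  shows "(\<integral>\<^sup>+y\<in>{0<..<x}. ennreal (y powr a) \<partial>lborel) = ennreal (x powr (a+1) / (a+1))"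
proof -
  have h: "((\<lambda>y. y powr a) has_integral (x powr (a+1) / (a+1))) {0..x}"
    using has_integral_powr_from_0[OF a] x by simp
  have "(\<integral>\<^sup>+y. ennreal (indicator {0..x} y * y powr a) \<partial>lborel) = ennreal (x powr (a+1) / (a+1))"
  proof (rule nn_integral_has_integral_lborel)
    show "((\<lambda>y. indicator {0..x} y * y powr a) has_integral x powr (a + 1) / (a + 1)) UNIV"
    proof -
      have "(\<lambda>y. indicator {0..x} y * y powr a) = (\<lambda>y. if y \<in> {0..x} then y powr a else 0)"
        by (auto simp: fun_eq_iff)
      then show ?thesis using h by (simp only: has_integral_restrict_UNIV)
    qed
  qed (auto simp: indicator_def)
  moreover have "(\<integral>\<^sup>+y\<in>{0<..<x}. ennreal (y powr a) \<partial>lborel) = (\<integral>\<^sup>+y. ennreal (indicator {0..x} y * y powr a) \<partial>lborel)"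
  proof (intro nn_integral_cong_AE)
    show "AE y in lborel. ennreal (y powr a) * indicator {0<..<x} y = ennreal (indicator {0..x} y * y powr a)"
      using AE_lborel_singleton[of 0] AE_lborel_singleton[of x]
      by eventually_elim (auto simp: indicator_def)
  qed
  ultimately show ?thesis by simp
qed

lemma int_powr_inf:
  fixes e m :: real
  assumes e: "e < -1" and m: "m > 0"
  shows "(\<integral>\<^sup>+y\<in>{m..}. ennreal (y powr e) \<partial>lborel) = ennreal (- (m powr (e+1)) / (e+1))"
proof -
  have h: "((\<lambda>y. y powr e) has_integral (- (m powr (e+1)) / (e+1))) {m..}"
    using has_integral_powr_to_inf[OF e m] by simp
  have "(\<integral>\<^sup>+y. ennreal (indicator {m..} y * y powr e) \<partial>lborel) = ennreal (- (m powr (e+1)) / (e+1))"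
  proof (rule nn_integral_has_integral_lborel)
    show "((\<lambda>y. indicator {m..} y * y powr e) has_integral - (m powr (e+1)) / (e+1)) UNIV"
    proof -
      have "(\<lambda>y. indicator {m..} y * y powr e) = (\<lambda>y. if y \<in> {m..} then y powr e else 0)"
        by (auto simp: fun_eq_iff)
      then show ?thesis using h by (simp only: has_integral_restrict_UNIV)
    qed
  qed (auto simp: indicator_def)
  moreover have "(\<integral>\<^sup>+y\<in>{m..}. ennreal (y powr e) \<partial>lborel) = (\<integral>\<^sup>+y. ennreal (indicator {m..} y * y powr e) \<partial>lborel)"
    by (intro nn_integral_cong) (auto simp: indicator_def)
  ultimately show ?thesis by simp
qed
definition good_m :: "ereal \<Rightarrow> real \<Rightarrow> bool" where
  "good_m l m \<longleftrightarrow> m > 0 \<and> {0<..<m} \<subseteq> Iset l \<and> (\<forall>x\<in>{0<..<m}. 1 - x/m \<le> wt l x)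
     \<and> (\<forall>x\<in>Iset l. 0 < x \<and> 0 \<le> wt l x \<and> wt l x \<le> 1)"

lemma exists_good_m:
  assumes l: "0 < l" shows "\<exists>m. good_m l m"
  using l
proof (cases rule: Iset_cases)
  case 1
  have w: "wt l x = 1" for x using 1 by (simp add: wt_def)
  have "good_m l 1"
    unfolding good_m_def w
  proof (intro conjI ballI)
    fix x assume "x \<in> Iset l"
    then show "0 < x" using 1(2) by simp
  next
    show "{0<..<1} \<subseteq> Iset l"
    proof
      fix x :: real assume "x \<in> {0<..<1}" then show "x \<in> Iset l" using 1(2) by simp
    qed
  qed auto
  then show ?thesis by blast
next
  case (2 L)
  have w: "wt l x = 1 - x / L" for x using 2 by (simp add: wt_def)
  have "good_m l L"
    unfolding good_m_def w
  proof (intro conjI ballI)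
    fix x assume "x \<in> Iset l"
    then have x: "0 < x" "x < L" using 2(3) by auto
    show "0 < x" by (rule x)
    show "0 \<le> 1 - x / L" using x by simp
    show "1 - x / L \<le> 1" using x 2 by simp
  next
    show "{0<..<L} \<subseteq> Iset l" using 2(3) by simp
  qed (use 2 in simp_all)
  then show ?thesis by blast
qed

definition gf :: "real \<Rightarrow> real \<Rightarrow> real \<Rightarrow> real \<Rightarrow> real" where
  "gf a p m x = (if 0 < x \<and> x < m then x powr a else if m \<le> x \<and> p < 0 then x else 0)"

lemma gf_meas[measurable]: "gf a p m \<in> borel_measurable borel"
  unfolding gf_def[abs_def] by measurable

lemma gf_adm:
  assumes "good_m l m" and l: "0 < l" shows "hardy_adm p l (gf a p m)"
  unfolding hardy_adm_def set_borel_measurable_def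
proof (intro conjI ballI impI)
  show "(\<lambda>x. indicator (Iset l) x *\<^sub>R gf a p m x) \<in> borel_measurable lborel"
    using l by measurable
next
  fix x assume "x \<in> Iset l"
  then have "x > 0" using assms by (auto simp: good_m_def)
  then show "0 \<le> gf a p m x" by (auto simp: gf_def)
next
  fix x assume "p < 0" "x \<in> Iset l"
  then have "x > 0" using assms by (auto simp: good_m_def)
  then show "0 < gf a p m x" using \<open>p < 0\<close> by (auto simp: gf_def)
qed

lemma inner_small:
  assumes a: "a > -1" and x: "0 < x" "x \<le> m"
  shows "(\<integral>\<^sup>+y\<in>{0<..<x}. ennreal (gf a p m y) \<partial>lborel) = ennreal (x powr (a+1) / (a+1))"
proof -
  have "(\<integral>\<^sup>+y\<in>{0<..<x}. ennreal (gf a p m y) \<partial>lborel) = (\<integral>\<^sup>+y\<in>{0<..<x}. ennreal (y powr a) \<partial>lborel)"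
    using x by (intro nn_integral_cong) (auto simp: gf_def indicator_def)
  then show ?thesis using int_powr0[OF a x(1)] by simp
qed

lemma lhs_pt:
  assumes a: "a > -1" and p: "p \<noteq> 0" and x: "0 < x" "x \<le> m"
  shows "epow (ennreal (1/x) * (\<integral>\<^sup>+y\<in>{0<..<x}. ennreal (gf a p m y) \<partial>lborel)) p * ennreal (1/x)
       = ennreal ((1+a) powr (-p) * x powr (a*p - 1))"
proof -
  have a1: "a + 1 > 0" using a by simp
  have "ennreal (1/x) * ennreal (x powr (a+1) / (a+1)) = ennreal (x powr a / (a+1))"
  proof -
    have "1/x * (x powr (a+1) / (a+1)) = x powr a / (a+1)"
      using x by (simp add: powr_add field_simps)
    then show ?thesis using x a1 by (simp add: ennreal_mult'[symmetric])
  qed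
  moreover have "epow (ennreal (x powr a / (a+1))) p = ennreal ((x powr a / (a+1)) powr p)"
    using x a1 p by (intro epow_real) auto
  moreover have "(x powr a / (a+1)) powr p * (1/x) = (1+a) powr (-p) * x powr (a*p - 1)"
    using x a1 by (simp add: powr_divide powr_powr powr_minus_divide powr_diff field_simps add.commute)
  ultimately show ?thesis using inner_small[OF a x] x a1
    by (simp add: ennreal_mult'[symmetric])
qed
lemma lhs_lower:
  assumes g: "good_m l m" and a: "a > -1" and p: "p \<noteq> 0" and s: "a * p > 0"
  shows "ennreal ((1+a) powr (-p) * (m powr (a*p) / (a*p))) \<le> hardy_lhs p l (gf a p m)"
proof -
  have m: "m > 0" and sub: "{0<..<m} \<subseteq> Iset l" using g by (auto simp: good_m_def)
  have "(\<integral>\<^sup>+x\<in>{0<..<m}. ennreal ((1+a) powr (-p)) * ennreal (x powr (a*p - 1)) \<partial>lborel)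
      = (\<integral>\<^sup>+x. ennreal ((1+a) powr (-p)) * (ennreal (x powr (a*p - 1)) * indicator {0<..<m} x) \<partial>lborel)"
    by (simp add: mult.assoc)
  also have "\<dots> = ennreal ((1+a) powr (-p)) * (\<integral>\<^sup>+x\<in>{0<..<m}. ennreal (x powr (a*p - 1)) \<partial>lborel)"
    by (rule nn_integral_cmult) measurable
  also have "\<dots> = ennreal ((1+a) powr (-p)) * ennreal (m powr (a*p - 1 + 1) / (a*p - 1 + 1))"
    using int_powr0[of "a*p - 1" m] s m by simp
  also have "\<dots> = ennreal ((1+a) powr (-p) * (m powr (a*p) / (a*p)))"
    by (simp add: ennreal_mult'[symmetric])
  finally have e: "(\<integral>\<^sup>+x\<in>{0<..<m}. ennreal ((1+a) powr (-p)) * ennreal (x powr (a*p - 1)) \<partial>lborel)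
      = ennreal ((1+a) powr (-p) * (m powr (a*p) / (a*p)))" .
  have "(\<integral>\<^sup>+x\<in>{0<..<m}. ennreal ((1+a) powr (-p)) * ennreal (x powr (a*p - 1)) \<partial>lborel) \<le> hardy_lhs p l (gf a p m)"
    unfolding hardy_lhs_def
  proof (intro nn_integral_mono)
    fix x
    show "ennreal ((1+a) powr (-p)) * ennreal (x powr (a*p - 1)) * indicator {0<..<m} x
      \<le> epow (ennreal (1 / x) * (\<integral>\<^sup>+ y\<in>{0<..<x}. ennreal (gf a p m y) \<partial>lborel)) p * ennreal (1 / x) * indicator (Iset l) x"
    proof (cases "x \<in> {0<..<m}")
      case True
      then have "x \<in> Iset l" using sub by auto
      then show ?thesis using True lhs_pt[OF a p, of x m] by (simp add: ennreal_mult'[symmetric])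
    qed simp
  qed
  then show ?thesis using e by simp
qed

lemma rhs_upper:
  assumes g: "good_m l m" and a: "a > -1" and p: "p \<noteq> 0" and s: "a * p > 0"
  shows "hardy_rhs p l (gf a p m) \<le> ennreal (m powr (a*p) / (a*p)) + ennreal (if p < 0 then - (m powr p) / p else 0)"
proof -
  have m: "m > 0" and sub: "{0<..<m} \<subseteq> Iset l" and wt: "\<And>x. x \<in> Iset l \<Longrightarrow> 0 < x \<and> 0 \<le> wt l x \<and> wt l x \<le> 1"
    using g by (auto simp: good_m_def)
  have "hardy_rhs p l (gf a p m) \<le> (\<integral>\<^sup>+x. ennreal (x powr (a*p - 1)) * indicator {0<..<m} x
      + ennreal (if p < 0 then x powr (p - 1) else 0) * indicator {m..} x \<partial>lborel)"
    unfolding hardy_rhs_def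
  proof (intro nn_integral_mono)
    fix x
    show "epow (ennreal (gf a p m x)) p * ennreal (wt l x / x) * indicator (Iset l) x
        \<le> ennreal (x powr (a*p - 1)) * indicator {0<..<m} x + ennreal (if p < 0 then x powr (p - 1) else 0) * indicator {m..} x"
    proof (cases "x \<in> Iset l")
      case True
      note w = wt[OF True]
      show ?thesis
      proof (cases "x < m")
        case True
        have e: "epow (ennreal (gf a p m x)) p = ennreal (x powr (a*p))"
          using True w p by (simp add: gf_def epow_real powr_powr)
        have "x powr (a*p) * (wt l x / x) \<le> x powr (a*p - 1)"
        proof -
          have "x powr (a*p) * (wt l x / x) \<le> x powr (a*p) * (1 / x)"
            using w by (intro mult_left_mono divide_right_mono) auto
          also have "\<dots> = x powr (a*p - 1)" using w by (simp add: powr_diff)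
          finally show ?thesis .
        qed
        then have "ennreal (x powr (a*p)) * ennreal (wt l x / x) \<le> ennreal (x powr (a*p - 1))"
          using w by (simp add: ennreal_mult'[symmetric] ennreal_leI)
        then show ?thesis using True w e \<open>x \<in> Iset l\<close> by (simp add: indicator_def)
      next
        case False
        show ?thesis
        proof (cases "p < 0")
          case True
          have e: "epow (ennreal (gf a p m x)) p = ennreal (x powr p)"
            using False True w by (simp add: gf_def epow_real)
          have "x powr p * (wt l x / x) \<le> x powr (p - 1)"
          proof -
            have "x powr p * (wt l x / x) \<le> x powr p * (1 / x)"
              using w by (intro mult_left_mono divide_right_mono) auto
            also have "\<dots> = x powr (p - 1)" using w by (simp add: powr_diff)
            finally show ?thesis .
          qed
          then have "ennreal (x powr p) * ennreal (wt l x / x) \<le> ennreal (x powr (p - 1))"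
            using w by (simp add: ennreal_mult'[symmetric] ennreal_leI)
          then show ?thesis using True False e \<open>x \<in> Iset l\<close> by (simp add: indicator_def)
        next
          case pp: False
          then have "p > 0" using p by simp
          then have "epow (ennreal (gf a p m x)) p = 0"
            using False pp w by (simp add: gf_def epow_def)
          then show ?thesis by simp
        qed
      qed
    qed simp
  qed
  also have "\<dots> = (\<integral>\<^sup>+x\<in>{0<..<m}. ennreal (x powr (a*p - 1)) \<partial>lborel)
      + (\<integral>\<^sup>+x\<in>{m..}. ennreal (if p < 0 then x powr (p - 1) else 0) \<partial>lborel)"
    by (rule nn_integral_add) auto
  also have "(\<integral>\<^sup>+x\<in>{0<..<m}. ennreal (x powr (a*p - 1)) \<partial>lborel) = ennreal (m powr (a*p) / (a*p))"
    using int_powr0[of "a*p - 1" m] s m by simp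
  also have "(\<integral>\<^sup>+x\<in>{m..}. ennreal (if p < 0 then x powr (p - 1) else 0) \<partial>lborel)
      = ennreal (if p < 0 then - (m powr p) / p else 0)"
  proof (cases "p < 0")
    case True
    then show ?thesis using int_powr_inf[of "p - 1" m] m by simp
  qed simp
  finally show ?thesis .
qed

lemma rhs_lower:
  assumes g: "good_m l m" and a: "a > -1" and p: "p \<noteq> 0" and s: "a * p > 0"
  shows "ennreal (m powr (a*p) / (a*p)) \<le> hardy_rhs p l (gf a p m) + ennreal (m powr (a*p) / (a*p + 1))"
proof -
  have m: "m > 0" and sub: "{0<..<m} \<subseteq> Iset l" and wt1: "\<And>x. x \<in> {0<..<m} \<Longrightarrow> 1 - x/m \<le> wt l x"
    and wt: "\<And>x. x \<in> Iset l \<Longrightarrow> 0 < x \<and> 0 \<le> wt l x \<and> wt l x \<le> 1"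
    using g by (auto simp: good_m_def)
  have "ennreal (m powr (a*p) / (a*p)) = (\<integral>\<^sup>+x\<in>{0<..<m}. ennreal (x powr (a*p - 1)) \<partial>lborel)"
    using int_powr0[of "a*p - 1" m] s m by simp
  also have "\<dots> \<le> (\<integral>\<^sup>+x. epow (ennreal (gf a p m x)) p * ennreal (wt l x / x) * indicator (Iset l) x
        + ennreal (1/m) * (ennreal (x powr (a*p)) * indicator {0<..<m} x) \<partial>lborel)"
  proof (intro nn_integral_mono)
    fix x
    show "ennreal (x powr (a*p - 1)) * indicator {0<..<m} x \<le> epow (ennreal (gf a p m x)) p * ennreal (wt l x / x) * indicator (Iset l) x
        + ennreal (1/m) * (ennreal (x powr (a*p)) * indicator {0<..<m} x)"
    proof (cases "x \<in> {0<..<m}")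
      case True
      then have xI: "x \<in> Iset l" using sub by auto
      note w = wt[OF xI]
      have e: "epow (ennreal (gf a p m x)) p = ennreal (x powr (a*p))"
        using True w p by (simp add: gf_def epow_real powr_powr)
      have "x powr (a*p - 1) = x powr (a*p) * ((1 - x/m) / x) + 1/m * x powr (a*p)"
        using w m by (simp add: powr_diff field_simps)
      also have "\<dots> \<le> x powr (a*p) * (wt l x / x) + 1/m * x powr (a*p)"
        using wt1[OF True] w by (intro add_right_mono mult_left_mono divide_right_mono) auto
      finally have "ennreal (x powr (a*p - 1)) \<le> ennreal (x powr (a*p) * (wt l x / x) + 1/m * x powr (a*p))"
        by (rule ennreal_leI)
      also have "\<dots> = ennreal (x powr (a*p)) * ennreal (wt l x / x) + ennreal (1/m) * ennreal (x powr (a*p))"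
        using w m by (simp add: ennreal_plus[symmetric] ennreal_mult'[symmetric] del: ennreal_plus)
      finally show ?thesis using True xI e by simp
    qed simp
  qed
  also have "\<dots> = hardy_rhs p l (gf a p m) + ennreal (1/m) * (\<integral>\<^sup>+x\<in>{0<..<m}. ennreal (x powr (a*p)) \<partial>lborel)"
  proof -
    have meas: "(\<lambda>x. epow (ennreal (gf a p m x)) p * ennreal (wt l x / x) * indicator (Iset l) x) \<in> borel_measurable lborel"
      by measurable
    have meas2: "(\<lambda>x. ennreal (1/m) * (ennreal (x powr (a*p)) * indicator {0<..<m} x)) \<in> borel_measurable lborel"
      by measurable
    have m3: "(\<lambda>x. ennreal (x powr (a*p)) * indicator {0<..<m} x) \<in> borel_measurable lborel"
      by measurable
    show ?thesis unfolding hardy_rhs_def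
      by (simp only: nn_integral_add[OF meas meas2] nn_integral_cmult[OF m3])
  qed
  also have "ennreal (1/m) * (\<integral>\<^sup>+x\<in>{0<..<m}. ennreal (x powr (a*p)) \<partial>lborel) = ennreal (m powr (a*p) / (a*p + 1))"
  proof -
    have "ennreal (1/m) * (\<integral>\<^sup>+x\<in>{0<..<m}. ennreal (x powr (a*p)) \<partial>lborel)
        = ennreal (1/m) * ennreal (m powr (a*p + 1) / (a*p + 1))"
      using int_powr0[of "a*p" m] s m by simp
    also have "\<dots> = ennreal (1/m * (m powr (a*p + 1) / (a*p + 1)))"
      using m s by (simp add: ennreal_mult'[symmetric])
    also have "1/m * (m powr (a*p + 1) / (a*p + 1)) = m powr (a*p) / (a*p + 1)"
      using m by (simp add: powr_add field_simps)
    finally show ?thesis .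
  qed
  finally show ?thesis .
qed
lemma lhs_upper:
  assumes g: "good_m l m" and a: "a > 0" and p: "0 < p"
  shows "hardy_lhs p l (gf a p m) \<le> ennreal ((1+a) powr (-p) * (m powr (a*p) / (a*p)))
           + ennreal ((1+a) powr (-p) * m powr (a*p) / p)"
proof -
  have m: "m > 0" and wt: "\<And>x. x \<in> Iset l \<Longrightarrow> 0 < x"
    using g by (auto simp: good_m_def)
  define M1 where "M1 = m powr (a+1) / (a+1)"
  have M1: "M1 > 0" using m a by (simp add: M1_def)
  have inner_big: "(\<integral>\<^sup>+y\<in>{0<..<x}. ennreal (gf a p m y) \<partial>lborel) = ennreal M1" if x: "m \<le> x" for x
  proof -
    have "(\<integral>\<^sup>+y\<in>{0<..<x}. ennreal (gf a p m y) \<partial>lborel) = (\<integral>\<^sup>+y\<in>{0<..<m}. ennreal (y powr a) \<partial>lborel)"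
      using x p by (intro nn_integral_cong) (auto simp: gf_def indicator_def)
    then show ?thesis using int_powr0[of a m] a m by (simp add: M1_def)
  qed
  have "hardy_lhs p l (gf a p m) \<le> (\<integral>\<^sup>+x. ennreal ((1+a) powr (-p) * x powr (a*p - 1)) * indicator {0<..<m} x
      + ennreal (M1 powr p * x powr (-p - 1)) * indicator {m..} x \<partial>lborel)"
    unfolding hardy_lhs_def
  proof (intro nn_integral_mono)
    fix x
    show "epow (ennreal (1 / x) * (\<integral>\<^sup>+ y\<in>{0<..<x}. ennreal (gf a p m y) \<partial>lborel)) p * ennreal (1 / x) * indicator (Iset l) x
      \<le> ennreal ((1+a) powr (-p) * x powr (a*p - 1)) * indicator {0<..<m} x
      + ennreal (M1 powr p * x powr (-p - 1)) * indicator {m..} x"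
    proof (cases "x \<in> Iset l")
      case True
      have x0: "x > 0" using wt[OF True] .
      show ?thesis
      proof (cases "x < m")
        case True
        then show ?thesis using lhs_pt[of a p x m] a p x0 \<open>x \<in> Iset l\<close> by (simp add: indicator_def)
      next
        case False
        have "ennreal (1/x) * ennreal M1 = ennreal (M1 / x)" using x0 M1 by (simp add: ennreal_mult'[symmetric])
        moreover have "epow (ennreal (M1 / x)) p = ennreal ((M1 / x) powr p)"
          using x0 M1 p by (intro epow_real) auto
        moreover have "(M1 / x) powr p * (1 / x) = M1 powr p * x powr (-p - 1)"
          using x0 M1 by (simp add: powr_divide powr_diff powr_minus_divide field_simps)
        ultimately show ?thesis using inner_big[of x] False x0 \<open>x \<in> Iset l\<close> M1
          by (simp add: indicator_def ennreal_mult'[symmetric])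
      qed
    qed simp
  qed
  also have "\<dots> = (\<integral>\<^sup>+x\<in>{0<..<m}. ennreal ((1+a) powr (-p) * x powr (a*p - 1)) \<partial>lborel)
      + (\<integral>\<^sup>+x\<in>{m..}. ennreal (M1 powr p * x powr (-p - 1)) \<partial>lborel)"
    by (rule nn_integral_add) auto
  also have "(\<integral>\<^sup>+x\<in>{0<..<m}. ennreal ((1+a) powr (-p) * x powr (a*p - 1)) \<partial>lborel)
      = ennreal ((1+a) powr (-p) * (m powr (a*p) / (a*p)))"
  proof -
    have "(\<integral>\<^sup>+x\<in>{0<..<m}. ennreal ((1+a) powr (-p) * x powr (a*p - 1)) \<partial>lborel)
        = (\<integral>\<^sup>+x. ennreal ((1+a) powr (-p)) * (ennreal (x powr (a*p - 1)) * indicator {0<..<m} x) \<partial>lborel)"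
      by (intro nn_integral_cong) (simp add: ennreal_mult mult.assoc)
    also have "\<dots> = ennreal ((1+a) powr (-p)) * (\<integral>\<^sup>+x\<in>{0<..<m}. ennreal (x powr (a*p - 1)) \<partial>lborel)"
      by (rule nn_integral_cmult) measurable
    also have "\<dots> = ennreal ((1+a) powr (-p)) * ennreal (m powr (a*p) / (a*p))"
      using int_powr0[of "a*p - 1" m] a p m by simp
    finally show ?thesis by (simp add: ennreal_mult'[symmetric])
  qed
  also have "(\<integral>\<^sup>+x\<in>{m..}. ennreal (M1 powr p * x powr (-p - 1)) \<partial>lborel)
      = ennreal ((1+a) powr (-p) * m powr (a*p) / p)"
  proof -
    have "(\<integral>\<^sup>+x\<in>{m..}. ennreal (M1 powr p * x powr (-p - 1)) \<partial>lborel)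
        = (\<integral>\<^sup>+x. ennreal (M1 powr p) * (ennreal (x powr (-p - 1)) * indicator {m..} x) \<partial>lborel)"
      by (intro nn_integral_cong) (simp add: ennreal_mult mult.assoc)
    also have "\<dots> = ennreal (M1 powr p) * (\<integral>\<^sup>+x\<in>{m..}. ennreal (x powr (-p - 1)) \<partial>lborel)"
      by (rule nn_integral_cmult) measurable
    also have "\<dots> = ennreal (M1 powr p) * ennreal (- (m powr (-p - 1 + 1)) / (-p - 1 + 1))"
      using int_powr_inf[of "-p - 1" m] p m by simp
    also have "\<dots> = ennreal (M1 powr p * (- (m powr (-p - 1 + 1)) / (-p - 1 + 1)))"
      using p m by (simp add: ennreal_mult'[symmetric])
    also have "M1 powr p * (- (m powr (-p - 1 + 1)) / (-p - 1 + 1)) = (1+a) powr (-p) * m powr (a*p) / p"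
    proof -
      have "M1 powr p = m powr ((a+1)*p) / (a+1) powr p"
        using m a by (simp add: M1_def powr_divide powr_powr)
      moreover have "m powr ((a+1)*p) * m powr (-p) = m powr (a*p)"
        by (simp add: powr_add[symmetric] algebra_simps)
      ultimately show ?thesis using p a m
        by (simp add: powr_minus_divide field_simps)
    qed
    finally show ?thesis .
  qed
  finally show ?thesis .
qed
lemma rhs_pos_fin:
  assumes g: "good_m l m" and a: "a > -1" and p: "p \<noteq> 0" and t: "a * p > 0" "a * p < 1"
  obtains r where "hardy_rhs p l (gf a p m) = ennreal r" "m powr (a*p) / (a*p) - m powr (a*p) \<le> r" "0 < r"
proof -
  have m: "m > 0" using g by (simp add: good_m_def)
  define T where "T = a * p"
  have T: "T > 0" "T < 1" using t by (auto simp: T_def)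
  have "hardy_rhs p l (gf a p m) \<le> ennreal (m powr (a*p) / (a*p)) + ennreal (if p < 0 then - (m powr p) / p else 0)"
    by (rule rhs_upper[OF g a p t(1)])
  also have "\<dots> < top" by simp
  finally have up: "hardy_rhs p l (gf a p m) < top" .
  then obtain r where r: "hardy_rhs p l (gf a p m) = ennreal r" "0 \<le> r"
    by (cases "hardy_rhs p l (gf a p m)") auto
  have nn: "0 \<le> r + m powr T / (T + 1)" using r m T by simp
  have le: "ennreal (m powr T / T) \<le> ennreal (r + m powr T / (T + 1))"
    using rhs_lower[OF g a p t(1)] r m T by (simp add: T_def ennreal_plus)
  have "m powr T / T \<le> r + m powr T / (T + 1)"
    by (rule ennreal_le_iff[THEN iffD1, OF nn le])
  moreover have "m powr T / (T + 1) \<le> m powr T" using m T by (simp add: field_simps)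
  ultimately have lb: "m powr T / T - m powr T \<le> r" by linarith
  have "m powr T / T - m powr T > 0"
  proof -
    have "m powr T * 1 < m powr T * (1 / T)" using m T by (intro mult_strict_left_mono) auto
    then show ?thesis by simp
  qed
  then show ?thesis using that r lb by (simp add: T_def)
qed
lemma c1_bound:
  fixes t p :: real
  assumes t: "0 < t" and p: "1 \<le> p \<or> (p < 0 \<and> t \<le> -p/2)"
  shows "1 - 2*t \<le> (1 + t/p) powr (-p)"
proof (cases "1 \<le> p")
  case True
  have u: "0 \<le> t/p" using t True by simp
  have pos: "1 + t/p > 0" using u by simp
  have "ln (1 + t/p) \<le> t/p" using ln_add_one_self_le_self[OF u] by simp
  then have "-p * ln (1 + t/p) \<ge> -p * (t/p)" using True by (intro mult_left_mono_neg) auto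
  then have e: "-p * ln (1 + t/p) \<ge> - t" using True by simp
  have "1 - 2*t \<le> 1 + (-t)" using t by simp
  also have "\<dots> \<le> exp (-t)" by (rule exp_ge_add_one_self)
  also have "\<dots> \<le> exp (-p * ln (1 + t/p))" using e by simp
  also have "\<dots> = (1 + t/p) powr (-p)" using pos by (simp add: powr_def)
  finally show ?thesis .
next
  case False
  then have p0: "p < 0" and sp: "t \<le> -p/2" using p by auto
  define q where "q = -p"
  have q: "q > 0" "t \<le> q/2" using p0 sp by (auto simp: q_def)
  define u where "u = t / q"
  have u: "0 \<le> u" "u \<le> 1/2" using q t by (auto simp: u_def field_simps)
  have eq: "1 + t/p = 1 - u" by (simp add: u_def q_def)
  have pos: "1 - u > 0" using u by simp
  have l: "- u - 2 * u\<^sup>2 \<le> ln (1 - u)" by (rule ln_one_minus_pos_lower_bound[OF u])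
  have "q * (- u - 2 * u\<^sup>2) \<le> q * ln (1 - u)" using l q by (intro mult_left_mono) auto
  moreover have "q * (- u - 2 * u\<^sup>2) = - t - 2 * t * u"
    using q by (simp add: u_def power2_eq_square field_simps)
  moreover have "2 * t * u \<le> t"
  proof -
    have "t * (2*u) \<le> t * 1" using u t by (intro mult_left_mono) auto
    then show ?thesis by (simp add: mult_ac)
  qed
  ultimately have e: "-2 * t \<le> q * ln (1 - u)" by linarith
  have "1 - 2*t \<le> 1 + (-2*t)" by simp
  also have "\<dots> \<le> exp (-2*t)" by (rule exp_ge_add_one_self)
  also have "\<dots> \<le> exp (q * ln (1 - u))" using e by simp
  also have "\<dots> = (1 + t/p) powr (-p)" using pos eq by (simp add: powr_def q_def)
  finally show ?thesis .
qed
lemma powr_ge_min: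
  fixes m t :: real
  assumes m: "m > 0" and t: "0 < t" "t \<le> 1"
  shows "min m 1 \<le> m powr t"
proof (cases "m \<le> 1")
  case True
  have "m powr 1 \<le> m powr t" using m True t by (intro powr_mono') auto
  then show ?thesis using True m by simp
next
  case False
  have "1 \<le> m powr t" using False t by (intro ge_one_powr_ge_zero) auto
  then show ?thesis by simp
qed

lemma sharp_c:
  assumes l: "0 < l" and p: "p < 0 \<or> 1 \<le> p" and C: "C < 1"
  shows "\<exists>g. hardy_adm p l g \<and> 0 < hardy_rhs p l g \<and> hardy_rhs p l g < \<infinity>
            \<and> \<not> hardy_lhs p l g \<le> ennreal C * hardy_rhs p l g"
proof -
  obtain m where g: "good_m l m" using exists_good_m[OF l] by blast
  have m: "m > 0" using g by (simp add: good_m_def)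
  have p0: "p \<noteq> 0" using p by auto
  define C' where "C' = max C 0"
  have C': "0 \<le> C'" "C' < 1" "ennreal C = ennreal C'" using C by (auto simp: C'_def max_def ennreal_neg)
  define E where "E = (if p < 0 then - (m powr p) / p else 0)"
  have E: "0 \<le> E" using p by (auto simp: E_def divide_nonneg_neg)
  define \<mu> where "\<mu> = min m 1"
  have \<mu>: "0 < \<mu>" using m by (simp add: \<mu>_def)
  define t where "t = min (min (1/2) ((1-C')/4)) (min (if p < 0 then -p/2 else 1) ((1-C')*\<mu>/(4*(C'*E+1))))"
  have CE: "C'*E + 1 > 0" using C' E by (simp add: add_nonneg_pos)
  have t0: "0 < t" using C' \<mu> CE p by (auto simp: t_def)
  have tA: "t \<le> min (1/2) ((1-C')/4)" unfolding t_def by (rule min.cobounded1)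
  have tB: "t \<le> min (if p < 0 then -p/2 else 1) ((1-C')*\<mu>/(4*(C'*E+1)))" unfolding t_def by (rule min.cobounded2)
  have t1: "t \<le> 1/2" "t \<le> (1-C')/4" "p < 0 \<Longrightarrow> t \<le> -p/2" "t \<le> (1-C')*\<mu>/(4*(C'*E+1))"
    using tA tB by (auto simp: min_le_iff_disj split: if_splits)
  define a where "a = t / p"
  have ap: "a * p = t" using p0 by (simp add: a_def)
  have a: "a > -1"
  proof (cases "p < 0")
    case True
    have "-1/2 \<le> t / p" using t1(3)[OF True] True by (simp add: field_simps)
    then show ?thesis by (simp add: a_def)
  next
    case False
    then have "0 < t / p" using t0 p by simp
    then show ?thesis by (simp add: a_def)
  qed
  define c1 where "c1 = (1+a) powr (-p)"
  have c1: "1 - 2*t \<le> c1"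
    using c1_bound[of t p] t0 p t1(3) by (auto simp: c1_def a_def)
  have mt: "\<mu> \<le> m powr t" using powr_ge_min[OF m t0] t1(1) by (simp add: \<mu>_def)
  have J: "m powr t / t > 0" using m t0 by simp
  have key: "C' * (m powr t / t + E) < c1 * (m powr t / t)"
  proof -
    have "C' * E * t \<le> C' * E * ((1-C')*\<mu>/(4*(C'*E+1)))"
      using t1(4) C' E by (intro mult_left_mono) auto
    also have "\<dots> = (1-C')*\<mu>/4 * (C'*E/(C'*E+1))" using CE by (simp add: field_simps)
    also have "\<dots> \<le> (1-C')*\<mu>/4 * 1"
      using CE C' E \<mu> by (intro mult_left_mono) auto
    also have "\<dots> < (1-C')*\<mu>/2" using C' \<mu> by simp
    also have "\<dots> \<le> (1-C')/2 * m powr t" using mt C' by (simp add: mult_left_mono)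
    also have "\<dots> \<le> (1 - 2*t - C') * m powr t" using t1(2) by (intro mult_right_mono) auto
    also have "\<dots> \<le> (c1 - C') * m powr t" using c1 by (intro mult_right_mono) auto
    finally have "C' * E * t < (c1 - C') * m powr t" .
    then have "(C' * E * t) / t < ((c1 - C') * m powr t) / t" using t0 by (intro divide_strict_right_mono)
    then have "C' * E < (c1 - C') * (m powr t / t)" using t0 by simp
    moreover have "(c1 - C') * (m powr t / t) = c1 * (m powr t / t) - C' * (m powr t / t)"
      by (simp add: left_diff_distrib diff_divide_distrib)
    ultimately show ?thesis by (simp only: distrib_left)
  qed
  have lhs: "ennreal (c1 * (m powr t / t)) \<le> hardy_lhs p l (gf a p m)"
    using lhs_lower[OF g a p0] ap t0 by (simp add: c1_def)
  have rhs: "hardy_rhs p l (gf a p m) \<le> ennreal (m powr t / t + E)"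
    using rhs_upper[OF g a p0] ap t0 m E by (simp add: E_def ennreal_plus[symmetric] del: ennreal_plus)
  have tp: "a * p > 0" "a * p < 1" using ap t0 t1(1) by auto
  obtain r where r: "hardy_rhs p l (gf a p m) = ennreal r" "0 < r"
    using rhs_pos_fin[OF g a p0 tp] by blast
  have "ennreal C * hardy_rhs p l (gf a p m) \<le> ennreal C' * ennreal (m powr t / t + E)"
    using rhs C'(3) by (simp add: mult_left_mono)
  also have "\<dots> = ennreal (C' * (m powr t / t + E))" using C' by (simp add: ennreal_mult')
  also have "\<dots> < ennreal (c1 * (m powr t / t))"
  proof (rule ennreal_lessI)
    have "0 \<le> C' * (m powr t / t + E)" using C' E J by simp
    then show "0 < c1 * (m powr t / t)" using key by linarith
  qed (rule key)
  also have "\<dots> \<le> hardy_lhs p l (gf a p m)" by (rule lhs)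
  finally have "\<not> hardy_lhs p l (gf a p m) \<le> ennreal C * hardy_rhs p l (gf a p m)" by simp
  moreover have "0 < hardy_rhs p l (gf a p m)" "hardy_rhs p l (gf a p m) < \<infinity>" using r by simp_all
  ultimately show ?thesis
    using gf_adm[OF g l, of p a] by blast
qed
lemma sharp_d:
  assumes l: "0 < l" and p: "0 < p" "p \<le> 1" and C: "1 < C"
  shows "\<exists>g. hardy_adm p l g \<and> 0 < hardy_rhs p l g \<and> hardy_rhs p l g < \<infinity>
            \<and> \<not> ennreal C * hardy_rhs p l g \<le> hardy_lhs p l g"
proof -
  obtain m where g: "good_m l m" using exists_good_m[OF l] by blast
  have m: "m > 0" using g by (simp add: good_m_def)
  have p0: "p \<noteq> 0" using p by auto
  define t where "t = (C - 1) / (2 * (C + 1/p))"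
  have Cp: "C + 1/p > 0" using C p by (simp add: add_pos_pos)
  have t0: "0 < t" using C Cp by (simp add: t_def)
  have tC: "t * (C + 1/p) = (C - 1) / 2"
  proof -
    define D where "D = C + 1/p"
    have D: "D > 0" using Cp by (simp add: D_def)
    have "(C - 1) / (2 * D) * D = (C - 1) / 2" using D by (simp add: field_simps)
    then show ?thesis by (simp add: t_def D_def)
  qed
  have t1: "t < 1"
  proof -
    have ip: "0 < 1/p" using p by simp
    have c2: "(C - 1) / 2 < C" using C by (simp add: field_simps)
    have "C < C + 1/p" using ip by simp
    with c2 have "(C - 1) / 2 < C + 1/p" by (rule less_trans)
    then have "t * (C + 1/p) < 1 * (C + 1/p)" using tC by simp
    then show ?thesis using Cp by (simp only: mult_less_cancel_right)
  qed
  define a where "a = t / p"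
  have ap: "a * p = t" using p0 by (simp add: a_def)
  have a: "a > 0" using t0 p by (simp add: a_def)
  have am: "a > -1" using a by simp
  define c1 where "c1 = (1+a) powr (-p)"
  have c1: "c1 \<le> 1" "0 \<le> c1"
  proof -
    have "(1+a) powr (-p) \<le> (1+a) powr 0" using a p by (intro powr_mono) auto
    then show "c1 \<le> 1" using a by (simp add: c1_def)
  qed (simp add: c1_def)
  define X where "X = m powr t"
  have X: "X > 0" using m by (simp add: X_def)
  have tp: "a * p > 0" "a * p < 1" using ap t0 t1 by auto
  obtain r where r: "hardy_rhs p l (gf a p m) = ennreal r" "X / t - X \<le> r" "0 < r"
    using rhs_pos_fin[OF g am p0 tp] ap by (auto simp: X_def)
  have "hardy_lhs p l (gf a p m) \<le> ennreal (c1 * (X / t)) + ennreal (c1 * X / p)"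
    using lhs_upper[OF g a p(1)] ap by (simp add: c1_def X_def)
  also have "\<dots> = ennreal (c1 * (X / t) + c1 * X / p)"
    using c1 X t0 p by (simp add: ennreal_plus)
  also have "\<dots> \<le> ennreal (X / t + X / p)"
  proof (rule ennreal_leI)
    have "c1 * (X / t) \<le> 1 * (X / t)" using c1 X t0 by (intro mult_right_mono) auto
    moreover have "c1 * X / p \<le> 1 * X / p" using c1 X p by (intro divide_right_mono mult_right_mono) auto
    ultimately show "c1 * (X / t) + c1 * X / p \<le> X / t + X / p" by simp
  qed
  also have "\<dots> < ennreal (C * r)"
  proof (rule ennreal_lessI)
    have "C * (X / t - X) \<le> C * r" using r C by (intro mult_left_mono) auto
    moreover have "X / t + X / p < C * (X / t - X)"
    proof -
      have "t * (1/t + 1/p) = 1 + t/p" using t0 by (simp add: field_simps)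
      have "1 + t/p < C - C*t"
      proof -
        have "t * (C + 1/p) < C - 1" using tC C by simp
        then show ?thesis by (simp add: algebra_simps)
      qed
      then have "X * (1 + t/p) < X * (C - C*t)" using X by simp
      then have "(X * (1 + t/p)) / t < (X * (C - C*t)) / t" using t0 by (intro divide_strict_right_mono)
      moreover have "(X * (1 + t/p)) / t = X / t + X / p" using t0 by (simp add: field_simps)
      moreover have "(X * (C - C*t)) / t = C * (X / t - X)" using t0 by (simp add: field_simps)
      ultimately show ?thesis by simp
    qed
    ultimately show "X / t + X / p < C * r" by simp
    have "0 < X / t + X / p" using X t0 p by (intro add_pos_pos divide_pos_pos) auto
    then show "0 < C * r" using \<open>X / t + X / p < C * r\<close> by linarith
  qed
  also have "\<dots> = ennreal C * hardy_rhs p l (gf a p m)"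
    using r C by (simp add: ennreal_mult)
  finally have "\<not> ennreal C * hardy_rhs p l (gf a p m) \<le> hardy_lhs p l (gf a p m)" by simp
  moreover have "0 < hardy_rhs p l (gf a p m)" "hardy_rhs p l (gf a p m) < \<infinity>" using r by simp_all
  ultimately show ?thesis
    using gf_adm[OF g l, of p a] by blast
qed

theorem theorem2p2:
  fixes l :: ereal and p :: real
  assumes "0 < l"
  shows "((p < 0 \<or> 1 \<le> p) \<longrightarrow>
           (\<forall>g. hardy_adm p l g \<longrightarrow> hardy_lhs p l g \<le> hardy_rhs p l g)) \<and>
      ((0 < p \<and> p \<le> 1) \<longrightarrow>
           (\<forall>g. hardy_adm p l g \<longrightarrow> hardy_rhs p l g \<le> hardy_lhs p l g)) \<and>
      ((p < 0 \<or> 1 \<le> p) \<longrightarrow>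
           (\<forall>C::real. C < 1 \<longrightarrow> (\<exists>g. hardy_adm p l g \<and> 0 < hardy_rhs p l g
              \<and> hardy_rhs p l g < \<infinity> \<and> \<not> hardy_lhs p l g \<le> ennreal C * hardy_rhs p l g))) \<and>
      ((0 < p \<and> p \<le> 1) \<longrightarrow>
           (\<forall>C::real. 1 < C \<longrightarrow> (\<exists>g. hardy_adm p l g \<and> 0 < hardy_rhs p l g
              \<and> hardy_rhs p l g < \<infinity> \<and> \<not> ennreal C * hardy_rhs p l g \<le> hardy_lhs p l g)))"
proof (intro conjI impI allI)
  fix g assume "p < 0 \<or> 1 \<le> p" "hardy_adm p l g"
  then show "hardy_lhs p l g \<le> hardy_rhs p l g" using main_ab(1)[OF assms] by blast
next
  fix g assume "0 < p \<and> p \<le> 1" "hardy_adm p l g"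
  then show "hardy_rhs p l g \<le> hardy_lhs p l g" using main_ab(2)[OF assms] by blast
next
  fix C :: real assume "p < 0 \<or> 1 \<le> p" "C < 1"
  then show "\<exists>g. hardy_adm p l g \<and> 0 < hardy_rhs p l g \<and> hardy_rhs p l g < \<infinity>
      \<and> \<not> hardy_lhs p l g \<le> ennreal C * hardy_rhs p l g"
    by (rule sharp_c[OF assms])
next
  fix C :: real assume "0 < p \<and> p \<le> 1" "1 < C"
  then show "\<exists>g. hardy_adm p l g \<and> 0 < hardy_rhs p l g \<and> hardy_rhs p l g < \<infinity>
      \<and> \<not> ennreal C * hardy_rhs p l g \<le> hardy_lhs p l g"
    using sharp_d[OF assms] by blast
qed

end
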